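(* For every integer $d\ge 30$, $N_d>\frac{\sqrt d}{2}$; that is, there exists a well-rounded unimodular lattice in $\mathbb{R}^d$ whose covering radius is strictly larger than $\sqrt d/2$ (the covering radius of $\mathbb{Z}^d$).
   Context: A lattice $\Lambda\subset\mathbb{R}^d$ is \emph{well-rounded} if its shortest nonzero vectors (with respect to the Euclidean norm) span $\mathbb{R}^d$, and \emph{unimodular} if its covolume equals $1$. The \emph{covering radius} $r(\Lambda)$ of a lattice $\Lambda\subset\mathbb{R}^d$ is the least $r\ge 0$ such that $\mathbb{R}^d=\Lambda+B_r$, where $B_r$ is the closed Euclidean ball of radius $r$ centered at $0$. $N_d$ denotes the supremum of $r(\Lambda)$ over all well-rounded unimodular lattices $\Lambda\subset\mathbb{R}^d$. *)

theory Defs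
  imports "HOL-Analysis.Analysis"
begin

definition lattice_gen :: "real^'n^'n \<Rightarrow> (real^'n) set" where
  "lattice_gen B = range (\<lambda>k::int^'n. B *v (\<chi> i. of_int (k $ i)))"

definition is_lattice :: "(real^'n) set \<Rightarrow> bool" where
  "is_lattice L \<longleftrightarrow> (\<exists>B. invertible B \<and> L = lattice_gen B)"

text \<open>Covolume: absolute determinant of a basis (independent of the basis chosen).\<close>
definition covolume :: "(real^'n) set \<Rightarrow> real" where
  "covolume L = \<bar>det (SOME B. invertible B \<and> L = lattice_gen B)\<bar>"

definition unimodular :: "(real^'n) set \<Rightarrow> bool" where
  "unimodular L \<longleftrightarrow> is_lattice L \<and> covolume L = 1"

definition minimum_norm :: "(real^'n) set \<Rightarrow> real" where
  "minimum_norm L = Inf (norm ` (L - {0}))"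

definition shortest_vectors :: "(real^'n) set \<Rightarrow> (real^'n) set" where
  "shortest_vectors L = {v \<in> L. v \<noteq> 0 \<and> norm v = minimum_norm L}"

definition well_rounded :: "(real^'n) set \<Rightarrow> bool" where
  "well_rounded L \<longleftrightarrow> is_lattice L \<and> span (shortest_vectors L) = UNIV"

definition covering_radius :: "(real^'n) set \<Rightarrow> real" where
  "covering_radius L = Inf {r. r \<ge> 0 \<and> (\<forall>x. \<exists>v\<in>L. x \<in> cball v r)}"

end

theory Submission
  imports Defs
begin


lemma det_almost_diag:
  fixes A :: "real^'n^'n"
  assumes "\<And>i j. i \<noteq> p \<Longrightarrow> A$i$j = (if i = j then d i else 0)"
  shows "det A = (\<Prod>i\<in>UNIV-{p}. d i) * A$p$p"
proof -
  have z: "of_int (sign \<sigma>) * (\<Prod>i\<in>UNIV. A$i$\<sigma> i) = 0"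
    if s: "\<sigma> \<in> {\<sigma>. \<sigma> permutes (UNIV::'n set)} - {id}" for \<sigma>
  proof -
    have "\<exists>i. i \<noteq> p \<and> \<sigma> i \<noteq> i"
    proof (rule ccontr)
      assume "\<not> ?thesis"
      hence h: "\<And>i. i \<noteq> p \<Longrightarrow> \<sigma> i = i" by blast
      have pe: "\<sigma> p = p"
      proof (rule ccontr)
        assume "\<sigma> p \<noteq> p"
        hence "\<sigma> (\<sigma> p) = \<sigma> p" using h by blast
        moreover have "inj \<sigma>" using s permutes_inj by blast
        ultimately show False using \<open>\<sigma> p \<noteq> p\<close> by (metis injD)
      qed
      have "\<sigma> = id" using h pe by (metis eq_id_iff)
      thus False using s by simp
    qed
    then obtain i where "i \<noteq> p" "\<sigma> i \<noteq> i" by blast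
    hence "A$i$\<sigma> i = 0" using assms by simp
    thus ?thesis by (metis (no_types, lifting) UNIV_I finite mult_eq_0_iff prod_zero_iff)
  qed
  have "det A = of_int (sign (id::'n\<Rightarrow>'n)) * (\<Prod>i\<in>UNIV. A$i$id i)
      + (\<Sum>\<sigma>\<in>{\<sigma>. \<sigma> permutes (UNIV::'n set)} - {id}. of_int (sign \<sigma>) * (\<Prod>i\<in>UNIV. A$i$\<sigma> i))"
    unfolding det_def by (subst sum.remove[of _ id]) (auto simp: permutes_id)
  also have "\<dots> = (\<Prod>i\<in>UNIV. A$i$i)"
  proof -
    have "(\<Sum>\<sigma>\<in>{\<sigma>. \<sigma> permutes (UNIV::'n set)} - {id}. of_int (sign \<sigma>) * (\<Prod>i\<in>UNIV. A$i$\<sigma> i)) = 0"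
      by (rule sum.neutral) (use z in blast)
    thus ?thesis by (simp add: sign_id)
  qed
  also have "\<dots> = A$p$p * (\<Prod>i\<in>UNIV-{p}. A$i$i)" by (subst prod.remove[of _ p]) auto
  also have "(\<Prod>i\<in>UNIV-{p}. A$i$i) = (\<Prod>i\<in>UNIV-{p}. d i)" using assms by (intro prod.cong) auto
  finally show ?thesis by simp
qed

lemma Ints_det:
  fixes U :: "real^'n^'n"
  assumes "\<And>i j. U$i$j \<in> \<int>"
  shows "det U \<in> \<int>"
  unfolding det_def using assms by (intro Ints_sum Ints_mult Ints_prod) auto

lemma lattice_col:
  fixes B :: "real^'n^'n"
  assumes that: "lattice_gen B = lattice_gen B2"
  shows "\<exists>k::int^'n. (\<chi> i. B$i$j) = B2 *v (\<chi> i. of_int (k$i))"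
proof -
  have "B *v (\<chi> i. of_int ((\<chi> l. if l = j then 1 else (0::int))$i)) \<in> lattice_gen B"
    unfolding lattice_gen_def by blast
  moreover have "B *v (\<chi> i. of_int ((\<chi> l. if l = j then 1 else (0::int))$i)) = (\<chi> i. B$i$j)"
    by (simp add: matrix_vector_mult_def vec_eq_iff if_distrib cong: if_cong)
  ultimately have "(\<chi> i. B$i$j) \<in> lattice_gen B2" using that by simp
  thus ?thesis unfolding lattice_gen_def by auto
qed

lemma lattice_change:
  fixes B B2 :: "real^'n^'n"
  assumes "lattice_gen B = lattice_gen B2"
  shows "\<exists>U. B = B2 ** U \<and> (\<forall>i j. U$i$j \<in> \<int>)"
proof -
  have "\<forall>j. \<exists>k::int^'n. (\<chi> i. B$i$j) = B2 *v (\<chi> i. of_int (k$i))"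
    using lattice_col[OF assms] by blast
  then obtain K where K: "\<And>j. (\<chi> i. B$i$j) = B2 *v (\<chi> i. of_int (K j $i))" by metis
  define U :: "real^'n^'n" where "U = (\<chi> i j. of_int (K j $ i))"
  have "B = B2 ** U"
  proof -
    have "B$i$j = (B2 ** U)$i$j" for i j
    proof -
      have "B$i$j = (\<chi> i. B$i$j)$i" by simp
      also have "\<dots> = (B2 *v (\<chi> i. of_int (K j $i)))$i" using K by metis
      also have "\<dots> = (B2 ** U)$i$j" by (simp add: matrix_vector_mult_def matrix_matrix_mult_def U_def)
      finally show ?thesis .
    qed
    thus ?thesis by (simp add: vec_eq_iff)
  qed
  moreover have "\<forall>i j. U$i$j \<in> \<int>" by (simp add: U_def)
  ultimately show ?thesis by blast
qed

lemma det_lattice_invariant: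
  fixes B B2 :: "real^'n^'n"
  assumes "invertible B" "lattice_gen B = lattice_gen B2"
  shows "\<bar>det B\<bar> = \<bar>det B2\<bar>"
proof -
  obtain U where U: "B = B2 ** U" "\<forall>i j. U$i$j \<in> \<int>" using lattice_change assms(2) by blast
  obtain V where V: "B2 = B ** V" "\<forall>i j. V$i$j \<in> \<int>" using lattice_change assms(2)[symmetric] by blast
  have "det B = det B * (det V * det U)" using U V det_mul by (metis matrix_mul_assoc mult.assoc)
  moreover have "det B \<noteq> 0" using assms invertible_det_nz by blast
  ultimately have vu: "det V * det U = 1" by simp
  obtain a where a: "det U = of_int a" using Ints_det U(2) Ints_cases by metis
  obtain b where b: "det V = of_int b" using Ints_det V(2) Ints_cases by metis
  have "b * a = 1" using vu a b by (metis of_int_eq_1_iff of_int_mult)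
  hence "\<bar>a\<bar> = 1" using abs_zmult_eq_1[of a b] by (simp add: mult.commute)
  hence "\<bar>det U\<bar> = 1" using a by simp
  thus ?thesis using U by (simp add: det_mul abs_mult)
qed

lemma covolume_eq:
  fixes B :: "real^'n^'n"
  assumes "invertible B"
  shows "covolume (lattice_gen B) = \<bar>det B\<bar>"
proof -
  let ?B = "SOME B'. invertible B' \<and> lattice_gen B = lattice_gen B'"
  have "invertible ?B \<and> lattice_gen B = lattice_gen ?B" by (rule someI[of _ B]) (simp add: assms)
  thus ?thesis unfolding covolume_def using det_lattice_invariant[OF assms] by metis
qed



definition w :: "'n set \<Rightarrow> real \<Rightarrow> 'n \<Rightarrow> real" where
  "w S c i = (if i \<in> S then c else sqrt 2 * c)"

definition emb :: "'n set \<Rightarrow> real \<Rightarrow> int^'n \<Rightarrow> real^'n" where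
  "emb S c v = (\<chi> i. w S c i * of_int (v$i))"

definition Bm :: "'n set \<Rightarrow> 'n \<Rightarrow> real \<Rightarrow> real^'n^'n" where
  "Bm S p c = (\<chi> i j. if i = p then (if j = p then 2*c else if j \<in> S then -c else 0)
                     else (if i = j then w S c i else 0))"

lemma Bm_mult:
  fixes S :: "'n::finite set"
  assumes "p \<in> S"
  shows "Bm S p c *v (\<chi> i. of_int (K$i)) =
    (\<chi> i. if i = p then c * (2 * of_int (K$p) - (\<Sum>j\<in>S-{p}. of_int (K$j))) else w S c i * of_int (K$i))"
proof -
  have "(Bm S p c *v (\<chi> i. of_int (K$i)))$i =
    (if i = p then c * (2 * of_int (K$p) - (\<Sum>j\<in>S-{p}. of_int (K$j))) else w S c i * of_int (K$i))" for i
  proof (cases "i = p")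
    case True
    have "(Bm S p c *v (\<chi> i. of_int (K$i)))$i =
       (\<Sum>j\<in>UNIV. (if j = p then 2*c else if j \<in> S then -c else 0) * of_int (K$j))"
      using True by (simp add: matrix_vector_mult_def Bm_def)
    also have "\<dots> = 2*c * of_int (K$p) + (\<Sum>j\<in>UNIV-{p}. (if j = p then 2*c else if j \<in> S then -c else 0) * of_int (K$j))"
      by (subst sum.remove[of _ p]) auto
    also have "(\<Sum>j\<in>UNIV-{p}. (if j = p then 2*c else if j \<in> S then -c else 0) * of_int (K$j))
        = (\<Sum>j\<in>UNIV-{p}. (if j \<in> S then -c * of_int (K$j) else 0))"
      by (intro sum.cong) auto
    also have "\<dots> = (\<Sum>j\<in>(UNIV-{p}) \<inter> S. -c * of_int (K$j))"
      by (subst sum.inter_restrict) auto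
    also have "(UNIV-{p}) \<inter> S = S - {p}" by auto
    finally show ?thesis using True by (simp add: sum_distrib_left algebra_simps sum_negf)
  next
    case False
    have "(Bm S p c *v (\<chi> i. of_int (K$i)))$i =
       (\<Sum>j\<in>UNIV. (if i = j then w S c i else 0) * of_int (K$j))"
      using False by (simp add: matrix_vector_mult_def Bm_def)
    also have "\<dots> = (\<Sum>j\<in>UNIV. (if i = j then w S c i * of_int (K$j) else 0))"
      by (intro sum.cong) auto
    also have "\<dots> = w S c i * of_int (K$i)" by simp
    finally show ?thesis using False by simp
  qed
  thus ?thesis by (simp add: vec_eq_iff)
qed

lemma mem_L:
  fixes S :: "'n::finite set"
  assumes "p \<in> S"
  shows "x \<in> lattice_gen (Bm S p c) \<longleftrightarrow> (\<exists>v. even (\<Sum>i\<in>S. v$i) \<and> x = emb S c v)"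
proof
  assume "x \<in> lattice_gen (Bm S p c)"
  then obtain K where K: "x = Bm S p c *v (\<chi> i. of_int (K$i))" unfolding lattice_gen_def by auto
  define v where "v = (\<chi> i. if i = p then 2 * K$p - (\<Sum>j\<in>S-{p}. K$j) else K$i)"
  have "x = emb S c v"
    unfolding K Bm_mult[OF assms] by (simp add: vec_eq_iff emb_def v_def w_def assms)
  moreover have "(\<Sum>i\<in>S. v$i) = 2 * K$p"
  proof -
    have "(\<Sum>i\<in>S. v$i) = v$p + (\<Sum>i\<in>S-{p}. v$i)" using assms by (subst sum.remove[of _ p]) auto
    also have "(\<Sum>i\<in>S-{p}. v$i) = (\<Sum>i\<in>S-{p}. K$i)" by (intro sum.cong) (auto simp: v_def)
    finally show ?thesis by (simp add: v_def)
  qed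
  ultimately show "\<exists>v. even (\<Sum>i\<in>S. v$i) \<and> x = emb S c v" by (intro exI[of _ v]) auto
next
  assume "\<exists>v. even (\<Sum>i\<in>S. v$i) \<and> x = emb S c v"
  then obtain v where v: "even (\<Sum>i\<in>S. v$i)" "x = emb S c v" by blast
  define K where "K = (\<chi> i. if i = p then (\<Sum>i\<in>S. v$i) div 2 else v$i)"
  have s: "(\<Sum>i\<in>S. v$i) = v$p + (\<Sum>i\<in>S-{p}. v$i)" using assms by (subst sum.remove[of _ p]) auto
  have s2: "(\<Sum>j\<in>S-{p}. of_int (K$j)) = (\<Sum>j\<in>S-{p}. (of_int (v$j)::real))"
    by (intro sum.cong) (auto simp: K_def)
  have "2 * K$p = (\<Sum>i\<in>S. v$i)" using v(1) by (simp add: K_def)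
  hence "of_int (2 * K$p) = (of_int (v$p + (\<Sum>i\<in>S-{p}. v$i)) :: real)" using s by simp
  hence e: "2 * (of_int (K$p)::real) = of_int (v$p) + (\<Sum>i\<in>S-{p}. of_int (v$i))" by simp
  have "2 * of_int (K$p) - (\<Sum>j\<in>S-{p}. of_int (K$j)) = (of_int (v$p) :: real)"
    unfolding s2 using e by simp
  hence "x = Bm S p c *v (\<chi> i. of_int (K$i))"
    unfolding Bm_mult[OF assms] v(2) by (auto simp: vec_eq_iff emb_def w_def assms K_def)
  thus "x \<in> lattice_gen (Bm S p c)" unfolding lattice_gen_def by auto
qed

lemma det_Bm:
  fixes S :: "'n::finite set"
  assumes "p \<in> S"
  shows "det (Bm S p c) = (\<Prod>i\<in>UNIV-{p}. w S c i) * (2*c)"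
proof -
  have "det (Bm S p c) = (\<Prod>i\<in>UNIV-{p}. w S c i) * (Bm S p c)$p$p"
    by (rule det_almost_diag) (simp add: Bm_def)
  thus ?thesis by (simp add: Bm_def)
qed



lemma aux98: "15 \<le> k \<Longrightarrow> 16 * 8^k < 3 * (9::nat)^k"
proof (induction k rule: nat_induct_at_least)
  case base then show ?case by simp
next
  case (Suc n) then show ?case by simp
qed

lemma numeric_even:
  assumes "15 \<le> k"
  shows "4 * 2^k * (2*k)^(2*k) < (3*k)^(2*(k::nat))"
proof -
  have a: "4 * 8^k < (9::nat)^k" using aux98[OF assms] by linarith
  have kp: "0 < k^(2*k)" using assms by simp
  have "4 * 2^k * (2*k)^(2*k) = (4 * 8^k) * k^(2*k)"
    by (simp add: power_mult_distrib power_mult flip: power_mult_distrib[of 2 4 k])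
  also have "\<dots> < 9^k * k^(2*k)" using a kp by simp
  also have "\<dots> = (3*k)^(2*k)" by (simp add: power_mult_distrib power_mult)
  finally show ?thesis .
qed

lemma numeric_odd:
  assumes "15 \<le> k"
  shows "4 * 2^(k+1) * (2*k+1)^(2*k+1) < (3*k+2)^(2*(k::nat)+1)"
proof -
  let ?m = "2*k+1"
  have a: "16 * 8^k < 3 * (9::nat)^k" using aux98[OF assms] .
  have "3^?m * (4 * 2^(k+1) * (2*k+1)^?m) = 8 * 2^k * (6*k+3)^?m"
  proof -
    have "(6*k+3)^?m = 3^?m * (2*k+1)^?m" by (simp flip: power_mult_distrib add: algebra_simps)
    thus ?thesis by simp
  qed
  also have "\<dots> \<le> 8 * 2^k * (2^?m * (3*k+2)^?m)"
  proof -
    have "(6*k+3)^?m \<le> (6*k+4)^?m" by (rule power_mono) auto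
    also have "(6*k+4)^?m = 2^?m * (3*k+2)^?m"
    proof -
      have e: "(6*k+4::nat) = 2*(3*k+2)" by simp
      show ?thesis by (simp only: e power_mult_distrib)
    qed
    finally show ?thesis by simp
  qed
  also have "\<dots> = (16 * 8^k) * (3*k+2)^?m"
    by (simp add: power_add power_mult flip: power_mult_distrib[of 2 4 k])
  also have "\<dots> < (3 * 9^k) * (3*k+2)^?m" using a by simp
  also have "\<dots> = 3^?m * (3*k+2)^?m" by (simp add: power_add power_mult)
  finally show ?thesis by simp
qed

lemma numeric:
  assumes "30 \<le> (d::nat)"
  shows "4 * 2^(d - d div 2) * d^d < (2*d - d div 2)^d"
proof -
  obtain k where "d = 2*k \<or> d = 2*k+1" by (metis dvd_mult_div_cancel odd_two_times_div_two_succ even_iff_mod_2_eq_zero)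
  thus ?thesis
  proof
    assume d: "d = 2*k"
    hence "15 \<le> k" using assms by simp
    moreover have "d div 2 = k" "d - d div 2 = k" "2*d - d div 2 = 3*k" using d by auto
    ultimately show ?thesis using numeric_even d by simp
  next
    assume d: "d = 2*k+1"
    hence "15 \<le> k" using assms by simp
    moreover have "d div 2 = k" "d - d div 2 = k+1" "2*d - d div 2 = 3*k+2" using d by auto
    ultimately show ?thesis using numeric_odd d by simp
  qed
qed


definition ev :: "'n \<Rightarrow> int^'n" where "ev i = (\<chi> j. if j = i then 1 else 0)"

lemma emb_add: "emb S c (a + b) = emb S c a + emb S c b"
  by (simp add: emb_def vec_eq_iff algebra_simps)
lemma emb_diff: "emb S c (a - b) = emb S c a - emb S c b"
  by (simp add: emb_def vec_eq_iff algebra_simps)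
lemma emb_ev: "emb S c (ev i) = w S c i *\<^sub>R axis i 1"
  by (simp add: emb_def vec_eq_iff ev_def axis_def)
lemma sum_ev: "finite S \<Longrightarrow> (\<Sum>j\<in>S. ev i $ j) = (if i \<in> S then 1 else 0)"
  by (simp add: ev_def)

lemma norm_sq_vec: "(norm (x::real^'n))^2 = (\<Sum>i\<in>UNIV. (x$i)^2)"
  by (simp add: norm_vec_def L2_set_def sum_nonneg)

lemma int_half: "(of_int (v::int) - 1/2)^2 \<ge> (1/4::real)"
proof -
  have "v * (v - 1) \<ge> 0" by (cases "v \<le> 0") (auto simp: mult_nonpos_nonpos)
  hence "(of_int (v * (v - 1))::real) \<ge> 0" by (simp only: of_int_0_le_iff)
  hence "(of_int v::real) * (of_int v - 1) \<ge> 0" by simp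
  thus ?thesis by (simp add: power2_eq_square algebra_simps)
qed

lemma norm_lower:
  fixes S :: "'n::finite set"
  assumes c: "c > 0" and e: "even (\<Sum>i\<in>S. v$i)" and nz: "v \<noteq> 0"
  shows "2 * c^2 \<le> (norm (emb S c v))^2"
proof -
  have eq: "(norm (emb S c v))^2 = (\<Sum>i\<in>UNIV. (w S c i)^2 * (of_int (v$i))^2)"
    by (simp add: norm_sq_vec emb_def power_mult_distrib)
  have nn: "\<And>i. 0 \<le> (w S c i)^2 * (of_int (v$i))^2" by simp
  have sub: "(\<Sum>i\<in>A. (w S c i)^2 * (of_int (v$i))^2) \<le> (norm (emb S c v))^2" for A
    unfolding eq by (rule sum_mono2) (auto simp: nn)
  obtain i where i: "v$i \<noteq> 0" using nz by (metis vec_eq_iff zero_index)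
  have sq1: "(1::real) \<le> (of_int (v$j))^2" if "v$j \<noteq> 0" for j
  proof -
    have "1 \<le> \<bar>v$j\<bar>" using that by linarith
    hence "1 \<le> \<bar>(of_int (v$j)::real)\<bar>" by (metis of_int_1_le_iff of_int_abs)
    hence "1 \<le> \<bar>(of_int (v$j)::real)\<bar>^2" by (rule one_le_power)
    thus ?thesis by simp
  qed
  show ?thesis
  proof (cases "i \<in> S")
    case False
    have "2 * c^2 \<le> (w S c i)^2 * (of_int (v$i))^2"
      using False sq1[OF i] by (simp add: w_def power_mult_distrib) (metis mult_left_mono mult.right_neutral zero_le_power2)
    also have "\<dots> \<le> (norm (emb S c v))^2" using sub[of "{i}"] by simp
    finally show ?thesis .
  next
    case True
    show ?thesis
    proof (cases "\<exists>j\<in>S. j \<noteq> i \<and> v$j \<noteq> 0")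
      case True2: True
      then obtain j where j: "j \<in> S" "j \<noteq> i" "v$j \<noteq> 0" by blast
      have "2 * c^2 \<le> (w S c i)^2 * (of_int (v$i))^2 + (w S c j)^2 * (of_int (v$j))^2"
      proof -
        have "c^2 * 1 \<le> c^2 * (of_int (v$i))^2" by (rule mult_left_mono) (use sq1[OF i] in simp_all)
        moreover have "c^2 * 1 \<le> c^2 * (of_int (v$j))^2" by (rule mult_left_mono) (use sq1[OF j(3)] in simp_all)
        ultimately show ?thesis using True j by (simp add: w_def)
      qed
      also have "\<dots> = (\<Sum>l\<in>{i,j}. (w S c l)^2 * (of_int (v$l))^2)" using j by simp
      also have "\<dots> \<le> (norm (emb S c v))^2" by (rule sub)
      finally show ?thesis .
    next
      case False2: False
      have "(\<Sum>l\<in>S. v$l) = v$i + (\<Sum>l\<in>S-{i}. v$l)" using True by (subst sum.remove[of _ i]) auto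
      also have "(\<Sum>l\<in>S-{i}. v$l) = 0" using False2 by (intro sum.neutral) auto
      finally have "even (v$i)" using e by simp
      then obtain m where m: "v$i = 2*m" by (elim evenE)
      hence "m \<noteq> 0" using i by simp
      hence "\<bar>v$i\<bar> \<ge> 2" using m by (simp add: abs_mult)
      hence "2 \<le> \<bar>(of_int (v$i)::real)\<bar>" by (metis of_int_abs of_int_le_iff of_int_numeral)
      hence "(2::real)^2 \<le> \<bar>(of_int (v$i)::real)\<bar>^2" by (rule power_mono) simp
      hence "(4::real) \<le> (of_int (v$i))^2" by simp
      hence "2 * c^2 \<le> (w S c i)^2 * (of_int (v$i))^2"
      proof -
        have "c^2 * 4 \<le> c^2 * (of_int (v$i))^2" by (rule mult_left_mono) (use \<open>4 \<le> _\<close> in simp_all)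
        hence "2 * c^2 \<le> c^2 * (of_int (v$i))^2" using zero_le_power2[of c] by linarith
        thus ?thesis using True by (simp add: w_def)
      qed
      also have "\<dots> \<le> (norm (emb S c v))^2" using sub[of "{i}"] by simp
      finally show ?thesis .
    qed
  qed
qed



lemma emb_zero: "emb S c 0 = 0" by (simp add: emb_def vec_eq_iff)

lemma norm_two_axis:
  assumes "i \<noteq> j"
  shows "norm (a *\<^sub>R axis i (1::real) + b *\<^sub>R axis j 1) = sqrt (a^2 + b^2)"
proof -
  have "(a *\<^sub>R axis i (1::real) + b *\<^sub>R axis j 1) \<bullet> (a *\<^sub>R axis i (1::real) + b *\<^sub>R axis j 1) = a^2 + b^2"
    using assms by (simp add: inner_add_left inner_add_right inner_axis_axis power2_eq_square)
  thus ?thesis by (simp add: norm_eq_sqrt_inner)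
qed

lemma norm_one_axis: "norm (a *\<^sub>R axis i (1::real)) = \<bar>a\<bar>"
proof -
  have "norm (axis i (1::real)) = 1" by (simp add: norm_eq_sqrt_inner inner_axis_axis)
  thus ?thesis by simp
qed

context
  fixes S :: "'n::finite set" and p q :: 'n and c :: real
  assumes pS: "p \<in> S" and qS: "q \<in> S" and pq: "p \<noteq> q" and c: "c > 0"
begin

lemma minnorm: "minimum_norm (lattice_gen (Bm S p c)) = sqrt 2 * c"
  unfolding minimum_norm_def
proof (rule cInf_eq_minimum)
  let ?v = "ev q + ev p"
  have "emb S c ?v = c *\<^sub>R axis q 1 + c *\<^sub>R axis p 1"
    using pS qS by (simp add: emb_add emb_ev w_def)
  hence n: "norm (emb S c ?v) = sqrt 2 * c" using pq c
    by (simp add: norm_two_axis real_sqrt_mult)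
  have "(\<Sum>i\<in>S. ?v $ i) = 2" using pS qS by (simp add: sum.distrib sum_ev)
  hence "even (\<Sum>i\<in>S. ?v $ i)" by simp
  hence "emb S c ?v \<in> lattice_gen (Bm S p c)" using mem_L[OF pS] by blast
  moreover have "emb S c ?v \<noteq> 0" using n c by auto
  ultimately show "sqrt 2 * c \<in> norm ` (lattice_gen (Bm S p c) - {0})" using n by (metis DiffI image_eqI singletonD)
next
  fix x assume "x \<in> norm ` (lattice_gen (Bm S p c) - {0})"
  then obtain y where y: "y \<in> lattice_gen (Bm S p c)" "y \<noteq> 0" "x = norm y" by auto
  then obtain v where v: "even (\<Sum>i\<in>S. v$i)" "y = emb S c v" using mem_L[OF pS] by auto
  have "v \<noteq> 0" using v y emb_zero by metis
  hence "2 * c^2 \<le> (norm y)^2" using norm_lower[OF c v(1)] v by simp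
  hence "sqrt (2 * c^2) \<le> sqrt ((norm y)^2)" by (rule real_sqrt_le_mono)
  thus "sqrt 2 * c \<le> x" using c y by (simp add: real_sqrt_mult)
qed

lemma sv_mem:
  assumes "even (\<Sum>i\<in>S. v$i)" "norm (emb S c v) = sqrt 2 * c"
  shows "emb S c v \<in> shortest_vectors (lattice_gen (Bm S p c))"
  unfolding shortest_vectors_def minnorm using assms mem_L[OF pS] c by auto

lemma wr: "span (shortest_vectors (lattice_gen (Bm S p c))) = UNIV"
proof -
  let ?SV = "shortest_vectors (lattice_gen (Bm S p c))"
  have ax: "axis i 1 \<in> span ?SV" for i
  proof -
    have pm: "axis j 1 \<in> span ?SV" if j: "j \<in> S" "j \<noteq> r" "r \<in> S" for j r
    proof -
      have e1: "emb S c (ev j + ev r) = c *\<^sub>R axis j 1 + c *\<^sub>R axis r 1"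
        using j by (simp add: emb_add emb_ev w_def)
      have e2: "emb S c (ev j - ev r) = c *\<^sub>R axis j 1 + (-c) *\<^sub>R axis r 1"
        using j by (simp add: emb_diff emb_ev w_def)
      have a: "emb S c (ev j + ev r) \<in> ?SV"
        by (rule sv_mem) (use j c in \<open>simp_all add: sum.distrib sum_ev e1 norm_two_axis real_sqrt_mult\<close>)
      have b: "emb S c (ev j - ev r) \<in> ?SV"
      proof (rule sv_mem)
        show "even (\<Sum>i\<in>S. (ev j - ev r) $ i)" using j by (simp add: sum_subtractf sum_ev)
        show "norm (emb S c (ev j - ev r)) = sqrt 2 * c"
          by (subst e2, subst norm_two_axis) (use j c in \<open>auto simp: real_sqrt_mult\<close>)
      qed
      have "axis j 1 = (1/(2*c)) *\<^sub>R (emb S c (ev j + ev r) + emb S c (ev j - ev r))"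
        unfolding e1 e2 using c by (simp add: algebra_simps flip: scaleR_add_left)
      thus ?thesis using a b by (metis span_add span_base span_mul)
    qed
    show ?thesis
    proof (cases "i \<in> S")
      case True
      then show ?thesis using pm[of i p] pm[of p q] pS qS pq by (cases "i = p") auto
    next
      case False
      have e: "emb S c (ev i) = (sqrt 2 * c) *\<^sub>R axis i 1" using False by (simp add: emb_ev w_def)
      have "emb S c (ev i) \<in> ?SV"
        by (rule sv_mem) (use False c in \<open>simp_all add: sum_ev e norm_one_axis abs_mult\<close>)
      moreover have "axis i 1 = (1/(sqrt 2 * c)) *\<^sub>R emb S c (ev i)" using c by (simp add: e)
      ultimately show ?thesis by (metis span_base span_mul)
    qed
  qed
  have "Basis \<subseteq> span ?SV" using ax by (auto simp: Basis_vec_def)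
  hence "span Basis \<subseteq> span ?SV" by (metis span_mono span_span)
  thus ?thesis by auto
qed

end


lemma coord_round:
  fixes x w :: real and e :: int
  assumes "w > 0" "e = 0 \<or> e = 1"
  shows "\<bar>x - w * of_int (\<lfloor>x / w\<rfloor> + e)\<bar> \<le> 2 * w"
proof -
  have f1: "of_int \<lfloor>x / w\<rfloor> \<le> x / w" "x / w < of_int \<lfloor>x / w\<rfloor> + 1" by linarith+
  have e01: "(of_int e::real) = 0 \<or> of_int e = 1" using assms(2) by auto
  have b: "\<bar>x / w - of_int \<lfloor>x / w\<rfloor> - of_int e\<bar> \<le> 2" using f1 e01 by (smt (verit))
  have "x = w * (x / w)" using assms by simp
  hence "x - w * of_int (\<lfloor>x / w\<rfloor> + e) = w * (x / w - of_int \<lfloor>x / w\<rfloor> - of_int e)"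
    by (simp add: algebra_simps)
  hence "\<bar>x - w * of_int (\<lfloor>x / w\<rfloor> + e)\<bar> = w * \<bar>x / w - of_int \<lfloor>x / w\<rfloor> - of_int e\<bar>"
    using assms by (simp add: abs_mult)
  also have "\<dots> \<le> w * 2" using assms b by (intro mult_left_mono) auto
  finally show ?thesis by simp
qed

context
  fixes S :: "'n::finite set" and p :: 'n and c :: real
  assumes pS: "p \<in> S" and c: "c > 0"
begin

lemma w_pos: "w S c i > 0" using c by (simp add: w_def)
lemma w_le: "w S c i \<le> sqrt 2 * c" using c by (simp add: w_def)

lemma cov_lower:
  assumes r: "\<forall>x. \<exists>v\<in>lattice_gen (Bm S p c). x \<in> cball v r"
  shows "sqrt (\<Sum>i\<in>UNIV. (w S c i)^2) / 2 \<le> r"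
proof -
  define y where "y = (\<chi> i. w S c i / 2)"
  obtain x where x: "x \<in> lattice_gen (Bm S p c)" "dist x y \<le> r" using r by (metis mem_cball)
  then obtain v where v: "x = emb S c v" using mem_L[OF pS] by auto
  have "(norm (x - y))^2 = (\<Sum>i\<in>UNIV. (w S c i)^2 * (of_int (v$i) - 1/2)^2)"
    unfolding norm_sq_vec v by (intro sum.cong) (simp_all add: emb_def y_def power2_eq_square algebra_simps)
  also have "\<dots> \<ge> (\<Sum>i\<in>UNIV. (w S c i)^2 * (1/4))"
    by (intro sum_mono mult_left_mono int_half) simp
  finally have "(\<Sum>i\<in>UNIV. (w S c i)^2) / 4 \<le> (norm (x - y))^2" by (simp add: sum_divide_distrib)
  hence "sqrt ((\<Sum>i\<in>UNIV. (w S c i)^2) / 4) \<le> sqrt ((norm (x - y))^2)" by (rule real_sqrt_le_mono)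
  hence "sqrt (\<Sum>i\<in>UNIV. (w S c i)^2) / 2 \<le> norm (x - y)" by (simp add: real_sqrt_divide)
  thus ?thesis using x by (simp add: dist_norm)
qed

lemma cov_upper:
  "\<exists>v\<in>lattice_gen (Bm S p c). x \<in> cball v (real CARD('n) * (2 * (sqrt 2 * c)))"
proof -
  define u where "u = (\<chi> i. \<lfloor>x$i / w S c i\<rfloor>)"
  define e where "e = (if even (\<Sum>i\<in>S. u$i) then 0 else 1::int)"
  define v where "v = u + e *s ev p"
  have ev: "even (\<Sum>i\<in>S. v$i)" using pS
    by (auto simp: v_def e_def sum.distrib sum_ev sum_distrib_left[symmetric] ev_def)
  hence mem: "emb S c v \<in> lattice_gen (Bm S p c)" using mem_L[OF pS] by blast
  have co: "\<bar>(emb S c v - x)$i\<bar> \<le> 2 * (sqrt 2 * c)" for i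
  proof -
    have "v$i = \<lfloor>x$i / w S c i\<rfloor> + (if i = p then e else 0)" by (simp add: v_def u_def ev_def)
    hence "\<bar>x$i - w S c i * of_int (v$i)\<bar> \<le> 2 * w S c i"
      by (simp only:) (rule coord_round[OF w_pos], auto simp: e_def)
    also have "\<dots> \<le> 2 * (sqrt 2 * c)" using w_le by simp
    finally show ?thesis by (simp add: emb_def abs_minus_commute)
  qed
  have "dist (emb S c v) x \<le> (\<Sum>i\<in>UNIV. \<bar>(emb S c v - x)$i\<bar>)" unfolding dist_norm by (rule norm_le_l1_cart)
  also have "\<dots> \<le> (\<Sum>i\<in>(UNIV::'n set). 2 * (sqrt 2 * c))" by (rule sum_mono) (rule co)
  also have "\<dots> = real CARD('n) * (2 * (sqrt 2 * c))" by simp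
  finally show ?thesis using mem by auto
qed

lemma cov_bound:
  "sqrt (\<Sum>i\<in>UNIV. (w S c i)^2) / 2 \<le> covering_radius (lattice_gen (Bm S p c))"
  unfolding covering_radius_def
proof (rule cInf_greatest)
  have "real CARD('n) * (2 * (sqrt 2 * c)) \<ge> 0" using c by simp
  thus "{r. 0 \<le> r \<and> (\<forall>x. \<exists>v\<in>lattice_gen (Bm S p c). x \<in> cball v r)} \<noteq> {}"
    using cov_upper by blast
qed (use cov_lower in blast)

lemma T_val: "(\<Sum>i\<in>UNIV. (w S c i)^2) = c^2 * (real (card S) + 2 * real (CARD('n) - card S))"
proof -
  have "(\<Sum>i\<in>UNIV. (w S c i)^2) = (\<Sum>i\<in>UNIV. if i \<in> S then c^2 else 2 * c^2)"
    by (intro sum.cong) (auto simp: w_def power_mult_distrib)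
  also have "\<dots> = c^2 * real (card S) + 2 * c^2 * real (card (UNIV - S))"
    by (simp add: sum.If_cases Compl_eq_Diff_UNIV)
  also have "card (UNIV - S) = CARD('n) - card S" by (simp add: card_Diff_subset)
  finally show ?thesis by (simp add: algebra_simps)
qed

lemma det_val: "det (Bm S p c) = c^(card S - 1) * (sqrt 2 * c)^(CARD('n) - card S) * (2 * c)"
proof -
  have "(\<Prod>i\<in>UNIV-{p}. w S c i) = (\<Prod>i\<in>(UNIV-{p}) \<inter> {i. i \<in> S}. c) * (\<Prod>i\<in>(UNIV-{p}) \<inter> - {i. i \<in> S}. sqrt 2 * c)"
    unfolding w_def by (rule prod.If_cases) simp
  also have "(UNIV-{p}) \<inter> {i. i \<in> S} = S - {p}" by auto
  also have "(UNIV-{p}) \<inter> - {i. i \<in> S} = UNIV - S" using pS by auto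
  finally have "(\<Prod>i\<in>UNIV-{p}. w S c i) = c^(card S - 1) * (sqrt 2 * c)^(CARD('n) - card S)"
    using pS by (simp add: card_Diff_subset)
  thus ?thesis using det_Bm[OF pS] by simp
qed

end


theorem mainTheorem2:
  assumes "CARD('n) \<ge> 30"
  shows "\<exists>L :: (real^'n::finite) set.
           well_rounded L \<and> unimodular L \<and> covering_radius L > sqrt (real CARD('n)) / 2"
proof -
  define d where "d = CARD('n)"
  define k where "k = d div 2"
  have d30: "d \<ge> 30" using assms d_def by simp
  have k15: "k \<ge> 15" "k \<le> d" using d30 by (auto simp: k_def)
  obtain S :: "'n set" where S: "card S = k" using obtain_subset_with_card_n[of k "UNIV::'n set"] k15 d_def by auto
  have "S \<noteq> {}" using S k15 by auto
  then obtain p where pS: "p \<in> S" by auto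
  have ck: "card (S - {p}) = k - 1" using S pS by simp
  have "S - {p} \<noteq> {}"
  proof
    assume "S - {p} = {}"
    hence "k - 1 = 0" using ck by (metis card.empty)
    thus False using k15 by simp
  qed
  then obtain q where "q \<in> S - {p}" by blast
  hence qS: "q \<in> S" and pq: "p \<noteq> q" by auto
  define a where "a = 1 / (2 * sqrt 2 ^ (d - k))"
  have a0: "a > 0" by (simp add: a_def)
  define c where "c = root d a"
  have dpos: "0 < d" using d30 by simp
  have c0: "c > 0" using a0 dpos by (simp add: c_def)
  have cd: "c ^ d = a" using a0 dpos by (simp add: c_def)
  define L where "L = lattice_gen (Bm S p c)"
  have detv: "det (Bm S p c) = 1"
  proof -
    have "det (Bm S p c) = c^(k - 1) * (sqrt 2 * c)^(d - k) * (2 * c)"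
      using det_val[OF pS c0] S d_def by simp
    also have "\<dots> = 2 * sqrt 2 ^ (d - k) * (c^(k-1) * c^(d-k) * c)"
      by (simp add: power_mult_distrib algebra_simps)
    also have "c^(k-1) * c^(d-k) * c = c^d"
    proof -
      have "k - 1 + (d - k) + 1 = d" using k15 by simp
      thus ?thesis by (metis power_add power_one_right)
    qed
    finally show ?thesis using cd by (simp add: a_def)
  qed
  have inv: "invertible (Bm S p c)" using detv by (simp add: invertible_det_nz)
  have isl: "is_lattice L" unfolding is_lattice_def L_def using inv by blast
  have uni: "unimodular L" unfolding unimodular_def using isl covolume_eq[OF inv] detv L_def by simp
  have wrd: "well_rounded L" unfolding well_rounded_def using isl wr[OF pS qS pq c0] L_def by simp
  define T where "T = (\<Sum>i\<in>UNIV. (w S c i)^2)"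
  have Tv: "T = c^2 * real (2*d - k)"
    unfolding T_def T_val[OF pS c0] S d_def[symmetric] using k15 by (simp add: of_nat_diff)
  have Td: "T > real d"
  proof (rule ccontr)
    assume "\<not> T > real d"
    hence h: "c^2 * real (2*d - k) \<le> real d" using Tv by simp
    have "(c^2 * real (2*d - k))^d \<le> (real d)^d" by (rule power_mono[OF h]) (use c0 in simp)
    moreover have "(c^2 * real (2*d - k))^d = (c^d)^2 * real ((2*d - k)^d)"
    proof -
      have "(c^2)^d = (c^d)^2" by (simp only: power_mult[symmetric] mult.commute)
      thus ?thesis by (simp only: power_mult_distrib of_nat_power)
    qed
    moreover have "(c^d)^2 = 1 / (4 * 2^(d-k))"
    proof -
      have "(sqrt 2 ^ (d - k))^2 = (sqrt 2 ^ 2)^(d-k)" by (simp only: power_mult[symmetric] mult.commute)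
      hence s2: "(sqrt 2 ^ (d - k))^2 = (2::real)^(d-k)" by simp
      have "(c^d)^2 = 1^2 / (2^2 * (sqrt 2 ^ (d - k))^2)" unfolding cd a_def by (simp only: power_divide power_mult_distrib)
      thus ?thesis unfolding s2 by simp
    qed
    ultimately have "real ((2*d - k)^d) / (4 * 2^(d-k)) \<le> real d ^ d" by simp
    hence "real ((2*d - k)^d) \<le> (4 * 2^(d-k)) * real d ^ d" by (simp add: divide_le_eq mult.commute)
    also have "\<dots> = real (4 * 2^(d-k) * d^d)" by simp
    finally have "(2*d - k)^d \<le> 4 * 2^(d-k) * d^d" by (simp only: of_nat_le_iff)
    moreover have "4 * 2^(d - d div 2) * d^d < (2*d - d div 2)^d" by (rule numeric[OF d30])
    ultimately show False by (simp add: k_def)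
  qed
  have "sqrt (real d) / 2 < sqrt T / 2" using Td by simp
  also have "sqrt T / 2 \<le> covering_radius L" unfolding T_def L_def by (rule cov_bound[OF pS c0])
  finally show ?thesis using wrd uni d_def by blast
qed


end
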